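(* For every $n\geq 1$ there exists a generalized NFA $M$ over a binary alphabet with $n$ states, each of which is both initial and final, such that the minimal (complete) DFA accepting $L(M)$ has $2^n$ states.
   Context: A generalized NFA is a quintuple $M=(Q,\Sigma,\delta,I,F)$ with finite state set $Q$, transition function $\delta: Q\times\Sigma\to 2^Q$, a set of initial states $I\subseteq Q$ and final states $F\subseteq Q$; it accepts $w$ iff $\delta(I,w)\cap F\neq\emptyset$. DFAs are required to be complete; the minimal DFA of a regular language is the complete DFA with fewest states accepting it. *)

theory Defs
  imports Main
begin

record nfa =
  nstates :: "nat set"
  ndelta  :: "nat \<Rightarrow> bool \<Rightarrow> nat set"
  ninit   :: "nat set"
  nfinal  :: "nat set"

definition is_nfa :: "nfa \<Rightarrow> bool" where
  "is_nfa M \<longleftrightarrow> finite (nstates M)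
     \<and> (\<forall>q\<in>nstates M. \<forall>a. ndelta M q a \<subseteq> nstates M)
     \<and> ninit M \<subseteq> nstates M \<and> nfinal M \<subseteq> nstates M"

fun ndelta_hat :: "nfa \<Rightarrow> nat set \<Rightarrow> bool list \<Rightarrow> nat set" where
  "ndelta_hat M S [] = S"
| "ndelta_hat M S (a # w) = ndelta_hat M (\<Union>q\<in>S. ndelta M q a) w"

definition nfa_lang :: "nfa \<Rightarrow> bool list set" where
  "nfa_lang M = {w. ndelta_hat M (ninit M) w \<inter> nfinal M \<noteq> {}}"

record dfa =
  dstates :: "nat set"
  ddelta  :: "nat \<Rightarrow> bool \<Rightarrow> nat"
  dinit   :: nat
  dfinal  :: "nat set"

definition is_dfa :: "dfa \<Rightarrow> bool" where
  "is_dfa D \<longleftrightarrow> finite (dstates D) \<and> dinit D \<in> dstates D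
     \<and> (\<forall>q\<in>dstates D. \<forall>a. ddelta D q a \<in> dstates D)
     \<and> dfinal D \<subseteq> dstates D"

fun ddelta_hat :: "dfa \<Rightarrow> nat \<Rightarrow> bool list \<Rightarrow> nat" where
  "ddelta_hat D q [] = q"
| "ddelta_hat D q (a # w) = ddelta_hat D (ddelta D q a) w"

definition dfa_lang :: "dfa \<Rightarrow> bool list set" where
  "dfa_lang D = {w. ddelta_hat D (dinit D) w \<in> dfinal D}"

definition min_dfa_states :: "bool list set \<Rightarrow> nat" where
  "min_dfa_states L = (LEAST k. \<exists>D. is_dfa D \<and> dfa_lang D = L \<and> card (dstates D) = k)"

end

theory Submission
  imports Defs
begin

definition Mn :: "nat \<Rightarrow> nfa" where
  "Mn n = \<lparr> nstates = {..<n},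
            ndelta = (\<lambda>q a. if a then {(q+1) mod n} else (if q = 0 then {} else {q})),
            ninit = {..<n}, nfinal = {..<n} \<rparr>"

lemma Mn_simps[simp]: "ndelta (Mn n) q a = (if a then {(q+1) mod n} else (if q = 0 then {} else {q}))"
  "nstates (Mn n) = {..<n}" "ninit (Mn n) = {..<n}" "nfinal (Mn n) = {..<n}"
  by (simp_all add: Mn_def)

lemma U_sing: "(\<Union>x\<in>S. {f x}) = f ` S" by auto

lemma nd_append: "ndelta_hat M S (u @ v) = ndelta_hat M (ndelta_hat M S u) v"
  by (induction u arbitrary: S) auto

lemma dd_append: "ddelta_hat D q (u @ v) = ddelta_hat D (ddelta_hat D q u) v"
  by (induction u arbitrary: q) auto

lemma dd_states: "is_dfa D \<Longrightarrow> q \<in> dstates D \<Longrightarrow> ddelta_hat D q w \<in> dstates D"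
  by (induction w arbitrary: q) (auto simp: is_dfa_def)

lemma nd_sub: "n > 0 \<Longrightarrow> S \<subseteq> {..<n} \<Longrightarrow> ndelta_hat (Mn n) S w \<subseteq> {..<n}"
proof (induction w arbitrary: S)
  case Nil then show ?case by simp
next
  case (Cons a w)
  have "(\<Union>q\<in>S. ndelta (Mn n) q a) \<subseteq> {..<n}"
    using Cons.prems by (auto split: if_splits)
  then show ?case using Cons by simp
qed

lemma nd_rep: "n > 0 \<Longrightarrow> S \<subseteq> {..<n} \<Longrightarrow> ndelta_hat (Mn n) S (replicate k True) = (\<lambda>q. (q+k) mod n) ` S"
proof (induction k arbitrary: S)
  case 0
  then show ?case by (force simp: image_iff)
next
  case (Suc k)
  have "ndelta_hat (Mn n) S (replicate (Suc k) True)
        = ndelta_hat (Mn n) ((\<lambda>q. (q+1) mod n) ` S) (replicate k True)"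
    by (simp add: U_sing)
  also have "\<dots> = (\<lambda>q. (q+k) mod n) ` ((\<lambda>q. (q+1) mod n) ` S)"
  proof (rule Suc.IH)
    show "(\<lambda>q. (q+1) mod n) ` S \<subseteq> {..<n}" using Suc.prems by auto
    show "0 < n" using Suc.prems by simp
  qed
  also have "\<dots> = (\<lambda>q. (q+Suc k) mod n) ` S"
    unfolding image_image by (rule image_cong) (simp_all add: mod_add_left_eq)
  finally show ?case .
qed

definition u :: "nat \<Rightarrow> nat \<Rightarrow> bool list" where
  "u n x = replicate ((n - x) mod n) True @ False # replicate x True"

lemma a1: "(q::nat) < n \<Longrightarrow> x < n \<Longrightarrow> 0<x \<Longrightarrow> x \<le> q \<Longrightarrow> (q + (n-x) mod n) mod n = q - x"
proof -
  assume h: "q < n" "x < n" "0<x" "x \<le> q"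
  have "(n-x) mod n = n - x" using h by simp
  then have e: "q + (n-x) mod n = (q - x) + n" using h by linarith
  have "q - x < n" using h by linarith
  then show ?thesis unfolding e mod_add_self2 by (rule mod_less)
qed
lemma a2: "(q::nat) < n \<Longrightarrow> x < n \<Longrightarrow> 0<x \<Longrightarrow> q < x \<Longrightarrow> (q + (n-x) mod n) mod n = q + n - x"
proof -
  assume h: "q < n" "x < n" "0<x" "q < x"
  have "(n-x) mod n = n - x" using h by simp
  moreover have "q + (n - x) = q + n - x" "q + n - x < n" using h by simp_all
  ultimately show ?thesis using h by simp
qed
lemma arith1: "(q::nat) < n \<Longrightarrow> x < n \<Longrightarrow> ((q + (n-x) mod n) mod n + x) mod n = q"
proof -
  assume h: "q < n" "x < n"
  consider "x = 0" | "0 < x" "x \<le> q" | "0<x" "q < x" by linarith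
  then show ?thesis
  proof cases
    case 1 then show ?thesis using h by simp
  next
    case 2 then show ?thesis using h a1[of q n x] by simp
  next
    case 3 then show ?thesis using h a2[of q n x] by simp
  qed
qed
lemma arith2: "(q::nat) < n \<Longrightarrow> x < n \<Longrightarrow> (q + (n-x) mod n) mod n = 0 \<longleftrightarrow> q = x"
proof -
  assume h: "q < n" "x < n"
  consider "x = 0" | "0 < x" "x \<le> q" | "0<x" "q < x" by linarith
  then show ?thesis
  proof cases
    case 1 then show ?thesis using h by simp
  next
    case 2 then show ?thesis using h a1[of q n x] by simp
  next
    case 3 then show ?thesis using h a2[of q n x] by simp
  qed
qed

lemma nd_false: "ndelta_hat (Mn n) S [False] = S - {0}"
  by auto

lemma nd_u: assumes "S \<subseteq> {..<n}" "x < n"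
  shows "ndelta_hat (Mn n) S (u n x) = S - {x}"
proof -
  have n: "n > 0" using assms by simp
  define s1 where "s1 = (\<lambda>q. (q + (n-x) mod n) mod n)"
  have A: "ndelta_hat (Mn n) S (replicate ((n - x) mod n) True) = s1 ` S"
    using nd_rep[OF n assms(1)] unfolding s1_def .
  have s0: "s1 q = 0 \<longleftrightarrow> q = x" if "q \<in> S" for q
  proof -
    have "q < n" using that assms(1) by blast
    then show ?thesis unfolding s1_def by (rule arith2[OF _ assms(2)])
  qed
  have B: "s1 ` S - {0} = s1 ` (S - {x})"
  proof (rule equalityI; rule subsetI)
    fix y assume "y \<in> s1 ` S - {0}"
    then obtain q where q: "q \<in> S" "y = s1 q" "y \<noteq> 0" by blast
    then have "q \<noteq> x" using s0[OF q(1)] by simp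
    then show "y \<in> s1 ` (S - {x})" using q by blast
  next
    fix y assume "y \<in> s1 ` (S - {x})"
    then obtain q where q: "q \<in> S" "q \<noteq> x" "y = s1 q" by blast
    then have "y \<noteq> 0" using s0[OF q(1)] by simp
    then show "y \<in> s1 ` S - {0}" using q by blast
  qed
  have C: "s1 ` (S - {x}) \<subseteq> {..<n}" using n unfolding s1_def by auto
  have D: "(\<lambda>q. (q + x) mod n) ` (s1 ` (S - {x})) = S - {x}"
  proof -
    have "(\<lambda>q. (q + x) mod n) ` (s1 ` (S - {x})) = (\<lambda>q. q) ` (S - {x})"
      unfolding image_image
    proof (rule image_cong)
      fix q assume "q \<in> S - {x}"
      then have "q < n" using assms by blast
      then show "(s1 q + x) mod n = q" unfolding s1_def by (rule arith1[OF _ assms(2)])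
    qed simp
    then show ?thesis by simp
  qed
  have E: "u n x = replicate ((n - x) mod n) True @ [False] @ replicate x True"
    by (simp add: u_def)
  show ?thesis
    unfolding E nd_append A nd_false B nd_rep[OF n C] D ..
qed


lemma nd_concat: "S \<subseteq> {..<n} \<Longrightarrow> set ys \<subseteq> {..<n} \<Longrightarrow>
  ndelta_hat (Mn n) S (concat (map (u n) ys)) = S - set ys"
proof (induction ys arbitrary: S)
  case Nil then show ?case by simp
next
  case (Cons y ys)
  have y: "y < n" using Cons.prems by simp
  have "ndelta_hat (Mn n) S (concat (map (u n) (y # ys)))
      = ndelta_hat (Mn n) (ndelta_hat (Mn n) S (u n y)) (concat (map (u n) ys))"
    by (simp add: nd_append)
  also have "\<dots> = ndelta_hat (Mn n) (S - {y}) (concat (map (u n) ys))"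
    using nd_u[OF Cons.prems(1) y] by simp
  also have "\<dots> = S - {y} - set ys"
    using Cons.IH[of "S - {y}"] Cons.prems by auto
  finally show ?case by auto
qed

lemma reach: assumes "T \<subseteq> {..<n}"
  shows "ndelta_hat (Mn n) {..<n} (concat (map (u n) (sorted_list_of_set ({..<n} - T)))) = T"
proof -
  have "set (sorted_list_of_set ({..<n} - T)) = {..<n} - T" by simp
  then show ?thesis using nd_concat[of "{..<n}" n "sorted_list_of_set ({..<n} - T)"] assms by auto
qed

lemma distg: assumes "T \<subseteq> {..<n}"
  shows "ndelta_hat (Mn n) T (concat (map (u n) (filter (\<lambda>y. y \<noteq> x) [0..<n]))) \<noteq> {}
     \<longleftrightarrow> x \<in> T"
proof -
  have "set (filter (\<lambda>y. y \<noteq> x) [0..<n]) \<subseteq> {..<n}" by auto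
  then have "ndelta_hat (Mn n) T (concat (map (u n) (filter (\<lambda>y. y \<noteq> x) [0..<n])))
     = T - set (filter (\<lambda>y. y \<noteq> x) [0..<n])" using nd_concat assms by blast
  also have "\<dots> = T \<inter> {x}" using assms by auto
  finally show ?thesis by auto
qed

lemma lang_Mn: "n > 0 \<Longrightarrow> w \<in> nfa_lang (Mn n) \<longleftrightarrow> ndelta_hat (Mn n) {..<n} w \<noteq> {}"
  using nd_sub[of n "{..<n}" w] unfolding nfa_lang_def by auto

lemma is_nfa_Mn: "n > 0 \<Longrightarrow> is_nfa (Mn n)"
  unfolding is_nfa_def by auto

lemma lower: assumes n: "n > 0" and D: "is_dfa D" "dfa_lang D = nfa_lang (Mn n)"
  shows "2 ^ n \<le> card (dstates D)"
proof -
  define r where "r T = concat (map (u n) (sorted_list_of_set ({..<n} - T)))" for T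
  define k where "k x = concat (map (u n) (filter (\<lambda>y. y \<noteq> x) [0..<(n::nat)]))" for x
  define g where "g T = ddelta_hat D (dinit D) (r T)" for T
  have mem: "r T @ v \<in> dfa_lang D \<longleftrightarrow> ddelta_hat D (g T) v \<in> dfinal D" for T v
    unfolding dfa_lang_def g_def by (simp add: dd_append)
  have key: "ddelta_hat D (g T) (k x) \<in> dfinal D \<longleftrightarrow> x \<in> T" if "T \<subseteq> {..<n}" for T x
  proof -
    have "ddelta_hat D (g T) (k x) \<in> dfinal D \<longleftrightarrow> r T @ k x \<in> nfa_lang (Mn n)"
      using mem D(2) by simp
    also have "\<dots> \<longleftrightarrow> ndelta_hat (Mn n) {..<n} (r T @ k x) \<noteq> {}" using lang_Mn[OF n] .
    also have "\<dots> \<longleftrightarrow> ndelta_hat (Mn n) T (k x) \<noteq> {}"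
      unfolding nd_append r_def reach[OF that] ..
    also have "\<dots> \<longleftrightarrow> x \<in> T" unfolding k_def using distg[OF that] .
    finally show ?thesis .
  qed
  have inj: "inj_on g (Pow {..<n})"
  proof (rule inj_onI)
    fix S T assume S: "S \<in> Pow {..<n}" and T: "T \<in> Pow {..<n}" and e: "g S = g T"
    show "S = T"
    proof (rule set_eqI)
      fix x show "x \<in> S \<longleftrightarrow> x \<in> T"
        using key[of S x] key[of T x] S T e by simp
    qed
  qed
  have sub: "g ` Pow {..<n} \<subseteq> dstates D"
    unfolding g_def using D(1) dd_states by (auto simp: is_dfa_def)
  have "card (Pow {..<n}) \<le> card (dstates D)"
    using card_inj_on_le[OF inj sub] D(1) by (simp add: is_dfa_def)
  then show ?thesis by (simp add: card_Pow)
qed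

lemma upper: assumes n: "n > 0"
  shows "\<exists>D. is_dfa D \<and> dfa_lang D = nfa_lang (Mn n) \<and> card (dstates D) = 2 ^ n"
proof -
  let ?P = "Pow {..<n::nat}"
  have "card ?P = card {..<(2::nat)^n}" by (simp add: card_Pow)
  then obtain f where f: "bij_betw f ?P {..<(2::nat)^n}"
    using finite_same_card_bij[of ?P "{..<(2::nat)^n}"] by auto
  define g where "g = inv_into ?P f"
  have gf: "g (f S) = S" if "S \<in> ?P" for S
    unfolding g_def using f that by (simp add: bij_betw_def)
  have fP: "f S \<in> {..<2^n}" if "S \<in> ?P" for S
    using f that by (auto simp: bij_betw_def)
  define D where "D = \<lparr> dstates = {..<2^n}, ddelta = (\<lambda>p a. f (ndelta_hat (Mn n) (g p) [a])),
     dinit = f {..<n}, dfinal = {p \<in> {..<2^n}. g p \<noteq> {}} \<rparr>"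
  have Ds: "dstates D = {..<2^n}" "ddelta D = (\<lambda>p a. f (ndelta_hat (Mn n) (g p) [a]))"
     "dinit D = f {..<n}" "dfinal D = {p \<in> {..<2^n}. g p \<noteq> {}}"
    unfolding D_def by simp_all
  have gP: "g p \<in> ?P" if "p \<in> {..<2^n}" for p
    unfolding g_def using f that by (metis bij_betw_def inv_into_into)
  have run: "ddelta_hat D (f S) w = f (ndelta_hat (Mn n) S w)" if "S \<in> ?P" for S w
    using that
  proof (induction w arbitrary: S)
    case Nil then show ?case by simp
  next
    case (Cons a w)
    have S1: "ndelta_hat (Mn n) S [a] \<in> ?P" using nd_sub[OF n, of S "[a]"] Cons.prems by auto
    have "ddelta_hat D (f S) (a # w) = ddelta_hat D (f (ndelta_hat (Mn n) S [a])) w"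
      using gf[OF Cons.prems] by (simp add: Ds)
    also have "\<dots> = f (ndelta_hat (Mn n) (ndelta_hat (Mn n) S [a]) w)" using Cons.IH[OF S1] .
    also have "\<dots> = f (ndelta_hat (Mn n) S (a # w))" using nd_append[of "Mn n" S "[a]" w] by simp
    finally show ?case .
  qed
  have isd: "is_dfa D"
    unfolding is_dfa_def Ds
  proof (intro conjI ballI allI)
    show "f {..<n} \<in> {..<2^n}" using fP by simp
    fix q a assume "q \<in> {..<(2::nat)^n}"
    then have "g q \<in> ?P" by (rule gP)
    then show "f (ndelta_hat (Mn n) (g q) [a]) \<in> {..<2^n}"
      using nd_sub[OF n, of "g q" "[a]"] fP by auto
  qed auto
  have lang: "dfa_lang D = nfa_lang (Mn n)"
  proof (rule set_eqI)
    fix w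
    have P: "ndelta_hat (Mn n) {..<n} w \<in> ?P" using nd_sub[OF n, of "{..<n}" w] by auto
    have "w \<in> dfa_lang D \<longleftrightarrow> f (ndelta_hat (Mn n) {..<n} w) \<in> dfinal D"
      unfolding dfa_lang_def Ds(3) using run[of "{..<n}" w] by simp
    also have "\<dots> \<longleftrightarrow> ndelta_hat (Mn n) {..<n} w \<noteq> {}"
      unfolding Ds(4) using fP[OF P] gf[OF P] by simp
    also have "\<dots> \<longleftrightarrow> w \<in> nfa_lang (Mn n)" using lang_Mn[OF n] by simp
    finally show "w \<in> dfa_lang D \<longleftrightarrow> w \<in> nfa_lang (Mn n)" .
  qed
  show ?thesis using isd lang Ds(1) by auto
qed

theorem mainTheorem12:
  fixes n :: nat
  assumes "n \<ge> 1"
  shows "\<exists>M. is_nfa M \<and> card (nstates M) = n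
             \<and> ninit M = nstates M \<and> nfinal M = nstates M
             \<and> min_dfa_states (nfa_lang M) = 2 ^ n"
proof -
  have n: "n > 0" using assms by simp
  have "min_dfa_states (nfa_lang (Mn n)) = 2 ^ n"
    unfolding min_dfa_states_def
  proof (rule Least_equality)
    show "\<exists>D. is_dfa D \<and> dfa_lang D = nfa_lang (Mn n) \<and> card (dstates D) = 2 ^ n"
      using upper[OF n] .
    fix y assume "\<exists>D. is_dfa D \<and> dfa_lang D = nfa_lang (Mn n) \<and> card (dstates D) = y"
    then show "2 ^ n \<le> y" using lower[OF n] by blast
  qed
  then show ?thesis using is_nfa_Mn[OF n] by (intro exI[of _ "Mn n"]) simp
qed

end
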